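(* Let $\Sigma$ be a finite reduct of the label cover signature, $\mathbf P^\Sigma$ the $\Sigma$-reduct of the label cover template $\mathbf P$, and $\mathbf B$ a structure. If $\gamma$ is a gadget from $\Sigma$-structures to structures of the signature of $\mathbf B$ such that $\gamma(\mathbf P^\Sigma)\to\mathbf B$, then $\gamma(\mathbf S)\to\pi_{\mathbf B}(\mathbf S)$ for every $\Sigma$-structure $\mathbf S$.
   Context: Structures. A (multisorted relational) signature consists of types and relation symbols, each symbol $R$ having an arity $\mathrm{ar}_R$, a tuple of types. A structure $\mathbf A$ consists of a set $A_t$ per type and relations $R^{\mathbf A}\subseteq A_{\mathrm{ar}_R(1)}\times\dots\times A_{\mathrm{ar}_R(k)}$. A homomorphism is a type-preserving family of maps preserving all relations; write $\mathbf A\to\mathbf B$. For a finite set $X$, $\mathbf B^X$ has domains $B_t^X$ (maps $X\to B_t$) and $(b_1,\dots,b_m)\in R^{\mathbf B^X}$ iff $(b_1(i),\dots,b_m(i))\in R^{\mathbf B}$ for all $i\in X$. Label cover. The label cover signature has a type $X$ for each finite set $X$ and a binary symbol $E_\pi$ of arity $(X,Y)$ for each map $\pi\colon X\to Y$. The label cover template $\mathbf P$ has domain $P_X=X$ for each type $X$ and $E_\pi^{\mathbf P}=\{(x,\pi(x))\mid x\in X\}$. A finite reduct $\Sigma$ consists of finitely many of these types and finitely many of these symbols (with their types); the $\Sigma$-reduct of a structure keeps only the domains and relations named in $\Sigma$. Gadgets. A gadget $\gamma$ from $\Pi$- to $\Sigma'$-structures consists of a $\Sigma'$-structure $\mathbf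 D_t^\gamma$ for each $\Pi$-type $t$, a $\Sigma'$-structure $\mathbf R^\gamma$ for each $\Pi$-symbol $R$, and homomorphisms $p_{R,i}^\gamma\colon\mathbf D^\gamma_{\mathrm{ar}_R(i)}\to\mathbf R^\gamma$ for $i\in[k]$, $k$ the arity of $R$. $\gamma(\mathbf A)$: take a copy of $\mathbf D^\gamma_t$ for each $a\in A_t$ (elements $(a;d)$) and a copy of $\mathbf R^\gamma$ for each $a\in R^{\mathbf A}$ (elements $(a;e)$); identify $(a;p^\gamma_{R,i}(e))$ with $(a_i;e)$ for all $a\in R^{\mathbf A}$, $i$, $e$; output the quotient by the generated equivalence relation with relations the images. Universal gadget. For a structure $\mathbf B$ and a structure $\mathbf S$ in (a reduct of) the label cover signature, $\pi_{\mathbf B}(\mathbf S)$ is obtained by taking a copy of $\mathbf B^X$ for each element $s$ of type $X$ (elements $(s;b)$, $b\colon X\to B_t$), identifying $(s;b\circ\sigma)$ with $(t;b)$ for each $(s,t)\in E_\sigma^{\mathbf S}$ with $\sigma\colon X\to Y$ and each $b\colon Y\to B_u$, and taking the quotient by the generated equivalence relation, with relations the images of those of the copies. *)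

theory Defs
  imports Main "HOL-Library.FuncSet"
begin

text \<open>A signature is given by a set of types Ty, a set of relation symbols Sy and an
  arity function ar (a list of types per symbol).\<close>

record ('t, 'r, 'e) mstruct =
  sdom :: "'t \<Rightarrow> 'e set"
  srel :: "'r \<Rightarrow> 'e list set"

definition wf_sig :: "'t set \<Rightarrow> 'r set \<Rightarrow> ('r \<Rightarrow> 't list) \<Rightarrow> bool" where
  "wf_sig Ty Sy ar \<longleftrightarrow> (\<forall>R\<in>Sy. set (ar R) \<subseteq> Ty)"

definition wf_struct :: "'t set \<Rightarrow> 'r set \<Rightarrow> ('r \<Rightarrow> 't list) \<Rightarrow> ('t, 'r, 'e) mstruct \<Rightarrow> bool" where
  "wf_struct Ty Sy ar A \<longleftrightarrow>
     (\<forall>R\<in>Sy. \<forall>as\<in>srel A R. length as = length (ar R) \<and>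
                (\<forall>i<length as. as ! i \<in> sdom A (ar R ! i)))"

definition hom :: "'t set \<Rightarrow> 'r set \<Rightarrow> ('r \<Rightarrow> 't list) \<Rightarrow> ('t, 'r, 'a) mstruct \<Rightarrow>
    ('t, 'r, 'b) mstruct \<Rightarrow> ('t \<Rightarrow> 'a \<Rightarrow> 'b) \<Rightarrow> bool" where
  "hom Ty Sy ar A B h \<longleftrightarrow>
     (\<forall>t\<in>Ty. \<forall>a\<in>sdom A t. h t a \<in> sdom B t) \<and>
     (\<forall>R\<in>Sy. \<forall>as\<in>srel A R. map2 h (ar R) as \<in> srel B R)"

definition eqgen :: "('e \<times> 'e) set \<Rightarrow> ('e \<times> 'e) set" where
  "eqgen G = (G \<union> G\<inverse>)\<^sup>*"

definition quot_struct :: "('t, 'r, 'e) mstruct \<Rightarrow> ('e \<times> 'e) set \<Rightarrow> ('t, 'r, 'e set) mstruct" where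
  "quot_struct A G =
     \<lparr> sdom = (\<lambda>t. (\<lambda>a. eqgen G `` {a}) ` sdom A t),
       srel = (\<lambda>R. map (\<lambda>a. eqgen G `` {a}) ` srel A R) \<rparr>"

text \<open>A gadget from (Ty1,Sy1,ar1)-structures to (Ty2,Sy2,ar2)-structures: structures gD t,
  gR R and maps gp R i (a type-indexed family) for the homomorphisms p_{R,i}.
  Indices i are 0-based.\<close>

record ('t1, 'r1, 't2, 'r2, 'd, 'e) gadget =
  gD :: "'t1 \<Rightarrow> ('t2, 'r2, 'd) mstruct"
  gR :: "'r1 \<Rightarrow> ('t2, 'r2, 'e) mstruct"
  gp :: "'r1 \<Rightarrow> nat \<Rightarrow> 't2 \<Rightarrow> 'd \<Rightarrow> 'e"

definition is_gadget :: "'t1 set \<Rightarrow> 'r1 set \<Rightarrow> ('r1 \<Rightarrow> 't1 list) \<Rightarrow>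
    't2 set \<Rightarrow> 'r2 set \<Rightarrow> ('r2 \<Rightarrow> 't2 list) \<Rightarrow> ('t1, 'r1, 't2, 'r2, 'd, 'e) gadget \<Rightarrow> bool" where
  "is_gadget Ty1 Sy1 ar1 Ty2 Sy2 ar2 g \<longleftrightarrow>
     (\<forall>t\<in>Ty1. wf_struct Ty2 Sy2 ar2 (gD g t)) \<and>
     (\<forall>R\<in>Sy1. wf_struct Ty2 Sy2 ar2 (gR g R) \<and>
        (\<forall>i<length (ar1 R). hom Ty2 Sy2 ar2 (gD g (ar1 R ! i)) (gR g R) (gp g R i)))"

text \<open>Elements of the disjoint union before gluing: Inl (t,a,u,d) is the copy of the element
  d (of type u) of gD t attached to a \<in> A_t; Inr (R,as,u,e) is the copy of e (of type u) of
  gR R attached to the tuple as \<in> R^A.\<close>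

definition gadget_pre :: "'t1 set \<Rightarrow> 'r1 set \<Rightarrow> ('r2 \<Rightarrow> 't2 list) \<Rightarrow>
    ('t1, 'r1, 't2, 'r2, 'd, 'e) gadget \<Rightarrow> ('t1, 'r1, 'a) mstruct \<Rightarrow>
    ('t2, 'r2, ('t1 \<times> 'a \<times> 't2 \<times> 'd) + ('r1 \<times> 'a list \<times> 't2 \<times> 'e)) mstruct" where
  "gadget_pre Ty1 Sy1 ar2 g A =
    \<lparr> sdom = (\<lambda>u. {Inl (t, a, u, d) | t a d. t \<in> Ty1 \<and> a \<in> sdom A t \<and> d \<in> sdom (gD g t) u}
               \<union> {Inr (R, as, u, e) | R as e. R \<in> Sy1 \<and> as \<in> srel A R \<and> e \<in> sdom (gR g R) u}),
      srel = (\<lambda>S. {map2 (\<lambda>u d. Inl (t, a, u, d)) (ar2 S) ds | t a ds.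
                      t \<in> Ty1 \<and> a \<in> sdom A t \<and> ds \<in> srel (gD g t) S}
               \<union> {map2 (\<lambda>u e. Inr (R, as, u, e)) (ar2 S) es | R as es.
                      R \<in> Sy1 \<and> as \<in> srel A R \<and> es \<in> srel (gR g R) S}) \<rparr>"

definition gadget_gen :: "'r1 set \<Rightarrow> ('r1 \<Rightarrow> 't1 list) \<Rightarrow> 't2 set \<Rightarrow>
    ('t1, 'r1, 't2, 'r2, 'd, 'e) gadget \<Rightarrow> ('t1, 'r1, 'a) mstruct \<Rightarrow>
    ((('t1 \<times> 'a \<times> 't2 \<times> 'd) + ('r1 \<times> 'a list \<times> 't2 \<times> 'e)) \<times>
     (('t1 \<times> 'a \<times> 't2 \<times> 'd) + ('r1 \<times> 'a list \<times> 't2 \<times> 'e))) set" where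
  "gadget_gen Sy1 ar1 Ty2 g A =
    {(Inr (R, as, u, gp g R i u d), Inl (ar1 R ! i, as ! i, u, d)) | R as i u d.
       R \<in> Sy1 \<and> as \<in> srel A R \<and> i < length (ar1 R) \<and> u \<in> Ty2 \<and>
       d \<in> sdom (gD g (ar1 R ! i)) u}"

definition gadget_apply :: "'t1 set \<Rightarrow> 'r1 set \<Rightarrow> ('r1 \<Rightarrow> 't1 list) \<Rightarrow>
    't2 set \<Rightarrow> ('r2 \<Rightarrow> 't2 list) \<Rightarrow>
    ('t1, 'r1, 't2, 'r2, 'd, 'e) gadget \<Rightarrow> ('t1, 'r1, 'a) mstruct \<Rightarrow>
    ('t2, 'r2, (('t1 \<times> 'a \<times> 't2 \<times> 'd) + ('r1 \<times> 'a list \<times> 't2 \<times> 'e)) set) mstruct" where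
  "gadget_apply Ty1 Sy1 ar1 Ty2 ar2 g A =
     quot_struct (gadget_pre Ty1 Sy1 ar2 g A) (gadget_gen Sy1 ar1 Ty2 g A)"

text \<open>Types of the label cover signature are finite sets X (of elements of type 'x);
  the symbol E_pi for pi : X \<rightarrow> Y is the triple (X, Y, pi), with pi extensional.\<close>

type_synonym 'x lcsym = "'x set \<times> 'x set \<times> ('x \<Rightarrow> 'x)"

definition lc_ar :: "'x lcsym \<Rightarrow> 'x set list" where
  "lc_ar s = (case s of (X, Y, f) \<Rightarrow> [X, Y])"

definition lc_finite_reduct :: "'x set set \<Rightarrow> 'x lcsym set \<Rightarrow> bool" where
  "lc_finite_reduct Ty Sy \<longleftrightarrow> finite Ty \<and> finite Sy \<and> (\<forall>X\<in>Ty. finite X) \<and>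
     (\<forall>(X, Y, f)\<in>Sy. X \<in> Ty \<and> Y \<in> Ty \<and> f \<in> X \<rightarrow>\<^sub>E Y)"

definition lc_template_reduct :: "'x set set \<Rightarrow> 'x lcsym set \<Rightarrow> ('x set, 'x lcsym, 'x) mstruct" where
  "lc_template_reduct Ty Sy =
    \<lparr> sdom = (\<lambda>X. if X \<in> Ty then X else {}),
      srel = (\<lambda>s. if s \<in> Sy then (case s of (X, Y, f) \<Rightarrow> {[x, f x] | x. x \<in> X}) else {}) \<rparr>"

definition pow_struct :: "('r \<Rightarrow> 't list) \<Rightarrow> ('t, 'r, 'b) mstruct \<Rightarrow> 'x set \<Rightarrow>
    ('t, 'r, 'x \<Rightarrow> 'b) mstruct" where
  "pow_struct ar B X =
    \<lparr> sdom = (\<lambda>u. X \<rightarrow>\<^sub>E sdom B u),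
      srel = (\<lambda>R. {bs. length bs = length (ar R) \<and>
                       (\<forall>j<length bs. bs ! j \<in> X \<rightarrow>\<^sub>E sdom B (ar R ! j)) \<and>
                       (\<forall>x\<in>X. map (\<lambda>b. b x) bs \<in> srel B R)}) \<rparr>"

text \<open>Element (X, s, u, b): the element b \<in> B_u^X of the copy of B^X attached to s \<in> S_X.\<close>

definition univ_pre :: "'x set set \<Rightarrow> ('r \<Rightarrow> 't list) \<Rightarrow> ('t, 'r, 'b) mstruct \<Rightarrow>
    ('x set, 'x lcsym, 's) mstruct \<Rightarrow> ('t, 'r, 'x set \<times> 's \<times> 't \<times> ('x \<Rightarrow> 'b)) mstruct" where
  "univ_pre Ty ar B S =
    \<lparr> sdom = (\<lambda>u. {(X, s, u, b) | X s b. X \<in> Ty \<and> s \<in> sdom S X \<and> b \<in> X \<rightarrow>\<^sub>E sdom B u}),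
      srel = (\<lambda>R. {map2 (\<lambda>u b. (X, s, u, b)) (ar R) bs | X s bs.
                      X \<in> Ty \<and> s \<in> sdom S X \<and> bs \<in> srel (pow_struct ar B X) R}) \<rparr>"

definition univ_gen :: "'x lcsym set \<Rightarrow> 't set \<Rightarrow> ('t, 'r, 'b) mstruct \<Rightarrow>
    ('x set, 'x lcsym, 's) mstruct \<Rightarrow>
    (('x set \<times> 's \<times> 't \<times> ('x \<Rightarrow> 'b)) \<times> ('x set \<times> 's \<times> 't \<times> ('x \<Rightarrow> 'b))) set" where
  "univ_gen Sy Ty2 B S =
    {((X, s, u, restrict (b \<circ> f) X), (Y, t, u, b)) | X Y f s t u b.
       (X, Y, f) \<in> Sy \<and> [s, t] \<in> srel S (X, Y, f) \<and> u \<in> Ty2 \<and> b \<in> Y \<rightarrow>\<^sub>E sdom B u}"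

definition univ_gadget :: "'x set set \<Rightarrow> 'x lcsym set \<Rightarrow> 't set \<Rightarrow> ('r \<Rightarrow> 't list) \<Rightarrow>
    ('t, 'r, 'b) mstruct \<Rightarrow> ('x set, 'x lcsym, 's) mstruct \<Rightarrow>
    ('t, 'r, ('x set \<times> 's \<times> 't \<times> ('x \<Rightarrow> 'b)) set) mstruct" where
  "univ_gadget Ty Sy Ty2 ar B S = quot_struct (univ_pre Ty ar B S) (univ_gen Sy Ty2 B S)"

end

theory Submission
  imports Defs
begin

lemma eqgen_equiv: "equiv UNIV (eqgen G)"
proof -
  have "sym (G \<union> G\<inverse>)" by (auto simp: sym_def)
  then have s: "sym ((G \<union> G\<inverse>)\<^sup>*)" by (rule sym_rtrancl)
  show ?thesis unfolding eqgen_def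
    apply (rule equivI)
       apply simp
      apply (rule refl_rtrancl)
     apply (rule s)
    apply (rule trans_rtrancl)
    done
qed

lemma eqgen_class: "(a,b) \<in> eqgen G \<Longrightarrow> eqgen G `` {a} = eqgen G `` {b}"
  by (rule equiv_class_eq[OF eqgen_equiv])

lemma eqgen_gen: "(a,b) \<in> G \<Longrightarrow> (a,b) \<in> eqgen G"
  unfolding eqgen_def by auto

lemma eqgen_self: "a \<in> eqgen G `` {a}"
  unfolding eqgen_def by auto

lemma eqgen_inv:
  assumes "\<And>a b. (a,b) \<in> G \<Longrightarrow> F a = F b" "(a,b) \<in> eqgen G"
  shows "F a = F b"
  using assms(2) unfolding eqgen_def
proof (induction rule: rtrancl_induct)
  case base then show ?case by simp
next
  case (step b c)
  then show ?case using assms(1) by auto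
qed

theorem mainTheorem16:
  fixes Ty :: "'x set set" and Sy :: "'x lcsym set"
    and Ty2 :: "'t set" and Sy2 :: "'r set" and ar2 :: "'r \<Rightarrow> 't list"
    and B :: "('t, 'r, 'b) mstruct"
    and g :: "('x set, 'x lcsym, 't, 'r, 'd, 'e) gadget"
    and S :: "('x set, 'x lcsym, 's) mstruct"
  assumes "lc_finite_reduct Ty Sy"
    and "wf_sig Ty2 Sy2 ar2"
    and "wf_struct Ty2 Sy2 ar2 B"
    and "is_gadget Ty Sy lc_ar Ty2 Sy2 ar2 g"
    and "\<exists>h. hom Ty2 Sy2 ar2 (gadget_apply Ty Sy lc_ar Ty2 ar2 g (lc_template_reduct Ty Sy)) B h"
    and "wf_struct Ty Sy lc_ar S"
  shows "\<exists>h. hom Ty2 Sy2 ar2 (gadget_apply Ty Sy lc_ar Ty2 ar2 g S) (univ_gadget Ty Sy Ty2 ar2 B S) h"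
proof -
  obtain h where hP: "hom Ty2 Sy2 ar2 (gadget_apply Ty Sy lc_ar Ty2 ar2 g (lc_template_reduct Ty Sy)) B h"
    using assms(5) by blast
  define P where "P = lc_template_reduct Ty Sy"
  define GP where "GP = gadget_gen Sy lc_ar Ty2 g P"
  define GS where "GS = gadget_gen Sy lc_ar Ty2 g S"
  define GU where "GU = univ_gen Sy Ty2 B S"
  define cP where "cP = (\<lambda>p. eqgen GP `` {p})"
  define cS where "cS = (\<lambda>p. eqgen GS `` {p})"
  define cU where "cU = (\<lambda>p. eqgen GU `` {p})"
  have hdom: "\<And>u p. u \<in> Ty2 \<Longrightarrow> p \<in> sdom (gadget_pre Ty Sy ar2 g P) u \<Longrightarrow> h u (cP p) \<in> sdom B u"
    using hP unfolding hom_def P_def cP_def GP_def gadget_apply_def quot_struct_def by auto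
  have hrel: "\<And>S2 ps. S2 \<in> Sy2 \<Longrightarrow> ps \<in> srel (gadget_pre Ty Sy ar2 g P) S2 \<Longrightarrow>
      map2 h (ar2 S2) (map cP ps) \<in> srel B S2"
    using hP unfolding hom_def P_def cP_def GP_def gadget_apply_def quot_struct_def by auto
  have preP_Inl: "\<And>t x d u. t \<in> Ty \<Longrightarrow> x \<in> t \<Longrightarrow> d \<in> sdom (gD g t) u \<Longrightarrow>
      Inl (t, x, u, d) \<in> sdom (gadget_pre Ty Sy ar2 g P) u"
    unfolding gadget_pre_def P_def lc_template_reduct_def by auto
  have preP_Inr: "\<And>X Y f x e u. (X,Y,f) \<in> Sy \<Longrightarrow> x \<in> X \<Longrightarrow> e \<in> sdom (gR g (X,Y,f)) u \<Longrightarrow>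
      Inr ((X,Y,f), [x, f x], u, e) \<in> sdom (gadget_pre Ty Sy ar2 g P) u"
    unfolding gadget_pre_def P_def lc_template_reduct_def by auto
  have relP: "\<And>X Y f x. (X,Y,f) \<in> Sy \<Longrightarrow> x \<in> X \<Longrightarrow> [x, f x] \<in> srel P (X,Y,f)"
    unfolding P_def lc_template_reduct_def by auto
  have domP: "\<And>X. X \<in> Ty \<Longrightarrow> sdom P X = X"
    unfolding P_def lc_template_reduct_def by auto
  have genP: "\<And>X Y f x u i d. (X,Y,f) \<in> Sy \<Longrightarrow> x \<in> X \<Longrightarrow> u \<in> Ty2 \<Longrightarrow> i < 2 \<Longrightarrow>
      d \<in> sdom (gD g ([X,Y] ! i)) u \<Longrightarrow>
      cP (Inr ((X,Y,f), [x, f x], u, gp g (X,Y,f) i u d)) = cP (Inl ([X,Y] ! i, [x, f x] ! i, u, d))"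
  proof -
    fix X Y f x u i d
    assume a: "(X,Y,f) \<in> Sy" "x \<in> X" "u \<in> Ty2" "i < 2" "d \<in> sdom (gD g ([X,Y] ! i)) u"
    have "(Inr ((X,Y,f), [x, f x], u, gp g (X,Y,f) i u d), Inl (lc_ar (X,Y,f) ! i, [x, f x] ! i, u, d)) \<in> GP"
      unfolding GP_def gadget_gen_def
      apply (rule CollectI)
      apply (rule exI[where x="(X,Y,f)"])
      apply (rule exI[where x="[x, f x]"])
      apply (rule exI[where x=i])
      apply (rule exI[where x=u])
      apply (rule exI[where x=d])
      using a relP by (auto simp: lc_ar_def)
    then show "cP (Inr ((X,Y,f), [x, f x], u, gp g (X,Y,f) i u d)) = cP (Inl ([X,Y] ! i, [x, f x] ! i, u, d))"
      unfolding cP_def by (auto simp: lc_ar_def intro!: eqgen_class eqgen_gen)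
  qed
  have Rfacts: "\<And>R as. R \<in> Sy \<Longrightarrow> as \<in> srel S R \<Longrightarrow> \<exists>X Y f s t. R = (X,Y,f) \<and> as = [s,t] \<and>
      X \<in> Ty \<and> Y \<in> Ty \<and> f \<in> X \<rightarrow>\<^sub>E Y \<and> s \<in> sdom S X \<and> t \<in> sdom S Y"
  proof -
    fix R as assume a: "R \<in> Sy" "as \<in> srel S R"
    obtain X Y f where Rd: "R = (X,Y,f)" by (cases R) auto
    have XY: "X \<in> Ty" "Y \<in> Ty" "f \<in> X \<rightarrow>\<^sub>E Y" using assms(1) a(1) Rd unfolding lc_finite_reduct_def by auto
    have w: "length as = 2" "\<forall>j<length as. as ! j \<in> sdom S ([X,Y] ! j)"
      using assms(6) a Rd unfolding wf_struct_def lc_ar_def by auto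
    then obtain s t where as: "as = [s,t]" by (auto simp: numeral_2_eq_2 length_Suc_conv)
    have "s \<in> sdom S X" "t \<in> sdom S Y" using w(2) as by auto
    then show "\<exists>X Y f s t. R = (X,Y,f) \<and> as = [s,t] \<and>
      X \<in> Ty \<and> Y \<in> Ty \<and> f \<in> X \<rightarrow>\<^sub>E Y \<and> s \<in> sdom S X \<and> t \<in> sdom S Y"
      using Rd as XY by blast
  qed
  define F where "F = (\<lambda>p. case p of
      Inl (t,a,u,d) \<Rightarrow> cU (t, a, u, \<lambda>x\<in>t. h u (cP (Inl (t,x,u,d))))
    | Inr (R,as,u,e) \<Rightarrow> cU (fst R, as!0, u, \<lambda>x\<in>fst R. h u (cP (Inr (R,[x, snd (snd R) x],u,e)))))"
  have Finv: "\<And>p q. (p,q) \<in> GS \<Longrightarrow> F p = F q"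
  proof -
    fix p q assume "(p,q) \<in> GS"
    then obtain R as i u d where p: "p = Inr (R,as,u,gp g R i u d)"
      and q: "q = Inl (lc_ar R ! i, as ! i, u, d)"
      and R: "R \<in> Sy" "as \<in> srel S R" "i < length (lc_ar R)" "u \<in> Ty2"
             "d \<in> sdom (gD g (lc_ar R ! i)) u"
      unfolding GS_def gadget_gen_def by blast
    obtain X Y f s t where Rd: "R = (X,Y,f)" and as: "as = [s,t]" and XY: "X \<in> Ty" "Y \<in> Ty" "f \<in> X \<rightarrow>\<^sub>E Y"
      and st: "s \<in> sdom S X" "t \<in> sdom S Y"
      using Rfacts[OF R(1,2)] by blast
    have i2: "i < 2" using R(3) by (simp add: Rd lc_ar_def)
    have "i = 0 \<or> i = 1" using i2 by auto
    then show "F p = F q"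
    proof
      assume i0: "i = 0"
      have d: "d \<in> sdom (gD g ([X,Y] ! 0)) u" using R(5) by (simp add: Rd i0 lc_ar_def)
      have "F p = cU (X, s, u, \<lambda>x\<in>X. h u (cP (Inr ((X,Y,f),[x, f x],u,gp g (X,Y,f) 0 u d))))"
        by (simp add: F_def p Rd as i0)
      also have "\<dots> = cU (X, s, u, \<lambda>x\<in>X. h u (cP (Inl (X,x,u,d))))"
      proof -
        have "(\<lambda>x\<in>X. h u (cP (Inr ((X,Y,f),[x, f x],u,gp g (X,Y,f) 0 u d)))) = (\<lambda>x\<in>X. h u (cP (Inl (X,x,u,d))))"
        proof (rule restrict_ext)
          fix x assume "x \<in> X"
          then show "h u (cP (Inr ((X,Y,f),[x, f x],u,gp g (X,Y,f) 0 u d))) = h u (cP (Inl (X,x,u,d)))"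
            using genP[OF R(1)[unfolded Rd] _ R(4) _ d] by simp
        qed
        then show ?thesis by simp
      qed
      also have "\<dots> = F q" by (simp add: F_def q Rd as i0 lc_ar_def)
      finally show ?thesis .
    next
      assume i1: "i = 1"
      have d: "d \<in> sdom (gD g ([X,Y] ! 1)) u" using R(5) by (simp add: Rd i1 lc_ar_def)
      define b where "b = (\<lambda>y\<in>Y. h u (cP (Inl (Y,y,u,d))))"
      have "F p = cU (X, s, u, \<lambda>x\<in>X. h u (cP (Inr ((X,Y,f),[x, f x],u,gp g (X,Y,f) 1 u d))))"
        by (simp add: F_def p Rd as i1)
      also have "\<dots> = cU (X, s, u, restrict (b \<circ> f) X)"
      proof -
        have "(\<lambda>x\<in>X. h u (cP (Inr ((X,Y,f),[x, f x],u,gp g (X,Y,f) 1 u d)))) = restrict (b \<circ> f) X"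
        proof (rule restrict_ext)
          fix x assume x: "x \<in> X"
          then have "f x \<in> Y" using XY(3) by auto
          then show "h u (cP (Inr ((X,Y,f),[x, f x],u,gp g (X,Y,f) 1 u d))) = (b \<circ> f) x"
            using genP[OF R(1)[unfolded Rd] x R(4) _ d] by (simp add: b_def)
        qed
        then show ?thesis by simp
      qed
      also have "\<dots> = cU (Y, t, u, b)"
      proof -
        have bB: "b \<in> Y \<rightarrow>\<^sub>E sdom B u"
          unfolding b_def using d by (auto intro!: hdom[OF R(4)] preP_Inl XY)
        have "((X, s, u, restrict (b \<circ> f) X), (Y, t, u, b)) \<in> GU"
          unfolding GU_def univ_gen_def
          using R(1,2) R(4) bB by (auto simp: Rd as)
        then show ?thesis unfolding cU_def by (intro eqgen_class eqgen_gen)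
      qed
      also have "\<dots> = F q" by (simp add: F_def q Rd as i1 lc_ar_def b_def)
      finally show ?thesis .
    qed
  qed
  define h' where "h' = (\<lambda>(u::'t) C. F (SOME q. q \<in> C))"
  have h'cls: "\<And>u p. h' u (cS p) = F p"
  proof -
    fix u p
    have "p \<in> cS p" unfolding cS_def by (rule eqgen_self)
    then have "(SOME q. q \<in> cS p) \<in> cS p" by (rule someI)
    then have "(p, SOME q. q \<in> cS p) \<in> eqgen GS" unfolding cS_def by simp
    then have "F p = F (SOME q. q \<in> cS p)" using eqgen_inv[where G=GS and F=F] Finv by blast
    then show "h' u (cS p) = F p" unfolding h'_def by simp
  qed
  show ?thesis
  proof (rule exI[where x=h'], unfold hom_def, intro conjI ballI)
    fix u C assume u: "u \<in> Ty2" and C: "C \<in> sdom (gadget_apply Ty Sy lc_ar Ty2 ar2 g S) u"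
    then obtain p where Cp: "C = cS p" and p: "p \<in> sdom (gadget_pre Ty Sy ar2 g S) u"
      unfolding gadget_apply_def quot_struct_def cS_def GS_def by auto
    have "F p \<in> cU ` sdom (univ_pre Ty ar2 B S) u"
    proof -
      from p consider (L) t a d where "p = Inl (t,a,u,d)" "t \<in> Ty" "a \<in> sdom S t" "d \<in> sdom (gD g t) u"
        | (R) R as e where "p = Inr (R,as,u,e)" "R \<in> Sy" "as \<in> srel S R" "e \<in> sdom (gR g R) u"
        unfolding gadget_pre_def by auto
      then show ?thesis
      proof cases
        case L
        have "(\<lambda>x\<in>t. h u (cP (Inl (t,x,u,d)))) \<in> t \<rightarrow>\<^sub>E sdom B u"
          using L by (auto intro!: hdom[OF u] preP_Inl)
        then have "(t,a,u,\<lambda>x\<in>t. h u (cP (Inl (t,x,u,d)))) \<in> sdom (univ_pre Ty ar2 B S) u"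
          using L unfolding univ_pre_def by auto
        then show ?thesis using L by (simp add: F_def)
      next
        case R
        obtain X Y f s t where Rd: "R = (X,Y,f)" and as: "as = [s,t]" and XY: "X \<in> Ty" "Y \<in> Ty" "f \<in> X \<rightarrow>\<^sub>E Y"
          and st: "s \<in> sdom S X" "t \<in> sdom S Y"
          using Rfacts[OF R(2,3)] by blast
        have "(\<lambda>x\<in>X. h u (cP (Inr ((X,Y,f),[x, f x],u,e)))) \<in> X \<rightarrow>\<^sub>E sdom B u"
          using R Rd by (auto intro!: hdom[OF u] preP_Inr)
        then have "(X,s,u,\<lambda>x\<in>X. h u (cP (Inr ((X,Y,f),[x, f x],u,e)))) \<in> sdom (univ_pre Ty ar2 B S) u"
          using XY st unfolding univ_pre_def by auto
        then show ?thesis using R by (simp add: F_def Rd as)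
      qed
    qed
    then show "h' u C \<in> sdom (univ_gadget Ty Sy Ty2 ar2 B S) u"
      unfolding univ_gadget_def quot_struct_def Cp h'cls cU_def GU_def by simp
  next
    fix S2 Cs assume S2: "S2 \<in> Sy2" and Cs: "Cs \<in> srel (gadget_apply Ty Sy lc_ar Ty2 ar2 g S) S2"
    then obtain ps where Csp: "Cs = map cS ps" and ps: "ps \<in> srel (gadget_pre Ty Sy ar2 g S) S2"
      unfolding gadget_apply_def quot_struct_def cS_def GS_def by auto
    have us: "set (ar2 S2) \<subseteq> Ty2" using assms(2) S2 unfolding wf_sig_def by auto
    have "map2 h' (ar2 S2) Cs \<in> map cU ` srel (univ_pre Ty ar2 B S) S2"
    proof -
      from ps consider (L) t a ds where "ps = map2 (\<lambda>u d. Inl (t,a,u,d)) (ar2 S2) ds" "t \<in> Ty"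
            "a \<in> sdom S t" "ds \<in> srel (gD g t) S2"
        | (R) R as es where "ps = map2 (\<lambda>u e. Inr (R,as,u,e)) (ar2 S2) es" "R \<in> Sy"
            "as \<in> srel S R" "es \<in> srel (gR g R) S2"
        unfolding gadget_pre_def by auto
      then show ?thesis
      proof cases
        case L
        have wf: "wf_struct Ty2 Sy2 ar2 (gD g t)" using assms(4) L(2) unfolding is_gadget_def by auto
        have len: "length ds = length (ar2 S2)"
          and dsj: "\<And>j. j < length ds \<Longrightarrow> ds!j \<in> sdom (gD g t) (ar2 S2 ! j)"
          using wf L(4) S2 unfolding wf_struct_def by auto
        define bs where "bs = map2 (\<lambda>u d. \<lambda>x\<in>t. h u (cP (Inl (t,x,u,d)))) (ar2 S2) ds"
        have eq: "map2 h' (ar2 S2) Cs = map cU (map2 (\<lambda>u b. (t,a,u,b)) (ar2 S2) bs)"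
          by (rule nth_equalityI) (simp_all add: Csp L(1) bs_def len h'cls F_def)
        have "bs \<in> srel (pow_struct ar2 B t) S2"
        proof -
          have "length bs = length (ar2 S2)" by (simp add: bs_def len)
          moreover have "\<forall>j<length bs. bs!j \<in> t \<rightarrow>\<^sub>E sdom B (ar2 S2 ! j)"
          proof (intro allI impI)
            fix j assume j: "j < length bs"
            then have j': "j < length ds" "j < length (ar2 S2)" by (simp_all add: bs_def len)
            have uj: "ar2 S2 ! j \<in> Ty2" using us j' by auto
            show "bs!j \<in> t \<rightarrow>\<^sub>E sdom B (ar2 S2 ! j)"
              using j' dsj[OF j'(1)] L(2) by (auto simp: bs_def intro!: hdom[OF uj] preP_Inl)
          qed
          moreover have "\<forall>x\<in>t. map (\<lambda>b. b x) bs \<in> srel B S2"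
          proof
            fix x assume x: "x \<in> t"
            have "map2 (\<lambda>u d. Inl (t,x,u,d)) (ar2 S2) ds \<in> srel (gadget_pre Ty Sy ar2 g P) S2"
              using L(2,4) x domP[OF L(2)] unfolding gadget_pre_def by auto
            from hrel[OF S2 this]
            have "map2 h (ar2 S2) (map cP (map2 (\<lambda>u d. Inl (t,x,u,d)) (ar2 S2) ds)) \<in> srel B S2" .
            moreover have "map2 h (ar2 S2) (map cP (map2 (\<lambda>u d. Inl (t,x,u,d)) (ar2 S2) ds)) = map (\<lambda>b. b x) bs"
              by (rule nth_equalityI) (simp_all add: bs_def len x)
            ultimately show "map (\<lambda>b. b x) bs \<in> srel B S2" by simp
          qed
          ultimately show ?thesis unfolding pow_struct_def by simp
        qed
        then have "map2 (\<lambda>u b. (t,a,u,b)) (ar2 S2) bs \<in> srel (univ_pre Ty ar2 B S) S2"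
          unfolding univ_pre_def using L(2,3) by auto
        then show ?thesis unfolding eq by (rule imageI)
      next
        case R
        obtain X Y f s t where Rd: "R = (X,Y,f)" and as: "as = [s,t]" and XY: "X \<in> Ty" "Y \<in> Ty" "f \<in> X \<rightarrow>\<^sub>E Y"
          and st: "s \<in> sdom S X" "t \<in> sdom S Y"
          using Rfacts[OF R(2,3)] by blast
        have wf: "wf_struct Ty2 Sy2 ar2 (gR g R)" using assms(4) R(2) unfolding is_gadget_def by auto
        have len: "length es = length (ar2 S2)"
          and esj: "\<And>j. j < length es \<Longrightarrow> es!j \<in> sdom (gR g R) (ar2 S2 ! j)"
          using wf R(4) S2 unfolding wf_struct_def by auto
        define bs where "bs = map2 (\<lambda>u e. \<lambda>x\<in>X. h u (cP (Inr ((X,Y,f),[x, f x],u,e)))) (ar2 S2) es"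
        have eq: "map2 h' (ar2 S2) Cs = map cU (map2 (\<lambda>u b. (X,s,u,b)) (ar2 S2) bs)"
          by (rule nth_equalityI) (simp_all add: Csp R(1) Rd as bs_def len h'cls F_def)
        have "bs \<in> srel (pow_struct ar2 B X) S2"
        proof -
          have "length bs = length (ar2 S2)" by (simp add: bs_def len)
          moreover have "\<forall>j<length bs. bs!j \<in> X \<rightarrow>\<^sub>E sdom B (ar2 S2 ! j)"
          proof (intro allI impI)
            fix j assume j: "j < length bs"
            then have j': "j < length es" "j < length (ar2 S2)" by (simp_all add: bs_def len)
            have uj: "ar2 S2 ! j \<in> Ty2" using us j' by auto
            show "bs!j \<in> X \<rightarrow>\<^sub>E sdom B (ar2 S2 ! j)"
              using j' esj[OF j'(1)] R(2) Rd by (auto simp: bs_def intro!: hdom[OF uj] preP_Inr)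
          qed
          moreover have "\<forall>x\<in>X. map (\<lambda>b. b x) bs \<in> srel B S2"
          proof
            fix x assume x: "x \<in> X"
            have "map2 (\<lambda>u e. Inr ((X,Y,f),[x, f x],u,e)) (ar2 S2) es \<in> srel (gadget_pre Ty Sy ar2 g P) S2"
              using R(2,4) x relP[of X Y f x] Rd unfolding gadget_pre_def by auto
            from hrel[OF S2 this]
            have "map2 h (ar2 S2) (map cP (map2 (\<lambda>u e. Inr ((X,Y,f),[x, f x],u,e)) (ar2 S2) es)) \<in> srel B S2" .
            moreover have "map2 h (ar2 S2) (map cP (map2 (\<lambda>u e. Inr ((X,Y,f),[x, f x],u,e)) (ar2 S2) es)) = map (\<lambda>b. b x) bs"
              by (rule nth_equalityI) (simp_all add: bs_def len x)
            ultimately show "map (\<lambda>b. b x) bs \<in> srel B S2" by simp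
          qed
          ultimately show ?thesis unfolding pow_struct_def by simp
        qed
        then have "map2 (\<lambda>u b. (X,s,u,b)) (ar2 S2) bs \<in> srel (univ_pre Ty ar2 B S) S2"
          unfolding univ_pre_def using XY st by auto
        then show ?thesis unfolding eq by (rule imageI)
      qed
    qed
    then show "map2 h' (ar2 S2) Cs \<in> srel (univ_gadget Ty Sy Ty2 ar2 B S) S2"
      unfolding univ_gadget_def quot_struct_def cU_def GU_def by simp
  qed
qed

end
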